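(* Let $G$ be a discriminating group and let $S\subset F$ be a set of weak identities in $G$. Then every element $s\in S$ is an identity in $G$, i.e. $\pi(s)=1$ for every homomorphism $\pi:F\to G$.
   Context: A group $G$ is discriminating if for every integer $N$ and every $h_1,\dots,h_N\in G\times G$ there is a homomorphism $\rho:G\times G\to G$ with $\rho(h_i)=1$ if and only if $h_i=1$, for each $i$. Let $F$ be the free group on countably many generators $g_1,g_2,\dots$. For $N\ge 1$, $F^{\times N}$ is the direct product of $N$ copies of $F$, $i_k:F\to F^{\times N}$ the $k$-th inclusion. A subset $S\subset F$ is a set of weak identities in $G$ if there exists $N\ge1$ such that for any $s_1,\dots,s_N\in S$ and any homomorphism $\rho:F^{\times N}\to G$ some $k$ has $\rho(i_k(s_k))=1$. *)

theory Defs
  imports "HOL-Algebra.Algebra"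
begin

text \<open>The free group F on countably many generators g_0, g_1, ... (indexed by nat),
realised as the group of freely reduced words.  A letter (True, n) stands for g_n,
(False, n) for its inverse.\<close>

type_synonym letter = "bool \<times> nat"
type_synonym word = "letter list"

definition inv_letter :: "letter \<Rightarrow> letter" where
  "inv_letter a = (\<not> fst a, snd a)"

fun cons_red :: "letter \<Rightarrow> word \<Rightarrow> word" where
  "cons_red a [] = [a]"
| "cons_red a (b # w) = (if b = inv_letter a then w else a # b # w)"

definition reduce :: "word \<Rightarrow> word" where
  "reduce w = foldr cons_red w []"

definition reduced :: "word \<Rightarrow> bool" where
  "reduced w \<longleftrightarrow> (\<forall>i. Suc i < length w \<longrightarrow> w ! Suc i \<noteq> inv_letter (w ! i))"

definition free_group_nat :: "word monoid" where
  "free_group_nat = \<lparr> carrier = {w. reduced w},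
                      monoid.mult = (\<lambda>x y. reduce (x @ y)),
                      one = [] \<rparr>"

definition free_power :: "nat \<Rightarrow> (nat \<Rightarrow> word) monoid" where
  "free_power N = product_group {..<N} (\<lambda>_. free_group_nat)"

definition incl :: "nat \<Rightarrow> nat \<Rightarrow> word \<Rightarrow> (nat \<Rightarrow> word)" where
  "incl N k x = (\<lambda>i\<in>{..<N}. if i = k then x else \<one>\<^bsub>free_group_nat\<^esub>)"

definition discriminating :: "('a, 'b) monoid_scheme \<Rightarrow> bool" where
  "discriminating G \<longleftrightarrow>
     (\<forall>(N::nat) (h :: nat \<Rightarrow> 'a \<times> 'a). (\<forall>i<N. h i \<in> carrier (G \<times>\<times> G)) \<longrightarrow>
        (\<exists>\<rho> \<in> hom (G \<times>\<times> G) G. \<forall>i<N. (\<rho> (h i) = \<one>\<^bsub>G\<^esub> \<longleftrightarrow> h i = \<one>\<^bsub>G \<times>\<times> G\<^esub>)))"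

definition weak_identities :: "word set \<Rightarrow> ('a, 'b) monoid_scheme \<Rightarrow> bool" where
  "weak_identities S G \<longleftrightarrow> S \<subseteq> carrier free_group_nat \<and>
     (\<exists>N::nat. N \<ge> 1 \<and>
        (\<forall>s :: nat \<Rightarrow> word. (\<forall>k<N. s k \<in> S) \<longrightarrow>
           (\<forall>\<rho> \<in> hom (free_power N) G. \<exists>k<N. \<rho> (incl N k (s k)) = \<one>\<^bsub>G\<^esub>)))"

definition is_identity :: "word \<Rightarrow> ('a, 'b) monoid_scheme \<Rightarrow> bool" where
  "is_identity s G \<longleftrightarrow> (\<forall>\<pi> \<in> hom free_group_nat G. \<pi> s = \<one>\<^bsub>G\<^esub>)"

end

theory Submission
  imports Defs
begin

primrec psi :: "('a, 'b) monoid_scheme \<Rightarrow> (word \<Rightarrow> 'a) \<Rightarrow> word \<Rightarrow> nat \<Rightarrow> nat \<Rightarrow> (nat \<Rightarrow> word) \<Rightarrow> 'a" where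
  "psi G p s N 0 = (\<lambda>x. \<one>\<^bsub>G\<^esub>)"
| "psi G p s N (Suc n) =
     (let h = (\<lambda>i. if i < n then (psi G p s N n (incl N i s), \<one>\<^bsub>G\<^esub>) else (\<one>\<^bsub>G\<^esub>, p s));
          r = (SOME r. r \<in> hom (G \<times>\<times> G) G \<and> (\<forall>i<Suc n. r (h i) = \<one>\<^bsub>G\<^esub> \<longleftrightarrow> h i = \<one>\<^bsub>G \<times>\<times> G\<^esub>))
      in (\<lambda>x. r (psi G p s N n x, p (x n))))"

lemma reduce_nil: "reduce [] = []"
  by (simp add: reduce_def)

lemma hom_nil:
  assumes G: "group G" and p: "p \<in> hom free_group_nat G"
  shows "p [] = \<one>\<^bsub>G\<^esub>"
proof -
  have c: "[] \<in> carrier free_group_nat" by (simp add: free_group_nat_def reduced_def)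
  have "p ([] \<otimes>\<^bsub>free_group_nat\<^esub> []) = p [] \<otimes>\<^bsub>G\<^esub> p []"
    using p c by (simp add: hom_mult)
  then have e: "p [] = p [] \<otimes>\<^bsub>G\<^esub> p []" by (simp add: free_group_nat_def reduce_nil)
  have pc: "p [] \<in> carrier G" using p c hom_carrier by blast
  show ?thesis using group.l_cancel_one'[OF G pc pc] e by simp
qed

lemma incl_carrier:
  assumes "s \<in> carrier free_group_nat"
  shows "incl N k s \<in> carrier (free_power N)"
  using assms by (auto simp: incl_def free_power_def free_group_nat_def reduced_def)

lemma psi_main:
  assumes G: "group G" and disc: "discriminating G"
    and p: "p \<in> hom free_group_nat G" and s: "s \<in> carrier free_group_nat"
    and ps: "p s \<noteq> \<one>\<^bsub>G\<^esub>"
  shows "n \<le> N \<Longrightarrow> psi G p s N n \<in> hom (free_power N) G \<and>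
     (\<forall>k<n. psi G p s N n (incl N k s) \<noteq> \<one>\<^bsub>G\<^esub>) \<and>
     (\<forall>x\<in>carrier (free_power N). (\<forall>i<n. x i = []) \<longrightarrow> psi G p s N n x = \<one>\<^bsub>G\<^esub>)"
proof (induction n)
  case 0
  then show ?case using G by (auto simp: hom_def group.is_monoid monoid.one_closed)
next
  case (Suc n)
  then have IH: "psi G p s N n \<in> hom (free_power N) G"
      "\<forall>k<n. psi G p s N n (incl N k s) \<noteq> \<one>\<^bsub>G\<^esub>"
      "\<forall>x\<in>carrier (free_power N). (\<forall>i<n. x i = []) \<longrightarrow> psi G p s N n x = \<one>\<^bsub>G\<^esub>"
    and nN: "n < N" by auto
  define h where "h = (\<lambda>i. if i < n then (psi G p s N n (incl N i s), \<one>\<^bsub>G\<^esub>) else (\<one>\<^bsub>G\<^esub>, p s))"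
  define r where "r = (SOME r. r \<in> hom (G \<times>\<times> G) G \<and> (\<forall>i<Suc n. r (h i) = \<one>\<^bsub>G\<^esub> \<longleftrightarrow> h i = \<one>\<^bsub>G \<times>\<times> G\<^esub>))"
  have eq: "psi G p s N (Suc n) = (\<lambda>x. r (psi G p s N n x, p (x n)))"
    by (simp add: h_def r_def Let_def)
  have one: "\<one>\<^bsub>G\<^esub> \<in> carrier G" using G by (simp add: group.is_monoid monoid.one_closed)
  have psc: "p s \<in> carrier G" using p s hom_carrier by blast
  have hc: "\<forall>i<Suc n. h i \<in> carrier (G \<times>\<times> G)"
  proof (intro allI impI)
    fix i assume "i < Suc n"
    have "psi G p s N n (incl N i s) \<in> carrier G"
      using IH(1) incl_carrier[OF s] hom_carrier by blast
    then show "h i \<in> carrier (G \<times>\<times> G)" using one psc by (simp add: h_def)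
  qed
  have "\<exists>r. r \<in> hom (G \<times>\<times> G) G \<and> (\<forall>i<Suc n. r (h i) = \<one>\<^bsub>G\<^esub> \<longleftrightarrow> h i = \<one>\<^bsub>G \<times>\<times> G\<^esub>)"
    using disc hc unfolding discriminating_def by blast
  then have "r \<in> hom (G \<times>\<times> G) G \<and> (\<forall>i<Suc n. r (h i) = \<one>\<^bsub>G\<^esub> \<longleftrightarrow> h i = \<one>\<^bsub>G \<times>\<times> G\<^esub>)"
    unfolding r_def by (rule someI_ex)
  then have r: "r \<in> hom (G \<times>\<times> G) G" "\<forall>i<Suc n. r (h i) = \<one>\<^bsub>G\<^esub> \<longleftrightarrow> h i = \<one>\<^bsub>G \<times>\<times> G\<^esub>"
    by blast+
  have GG: "group (G \<times>\<times> G)" using G by (simp add: DirProd_group)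
  have proj: "x n \<in> carrier free_group_nat" if "x \<in> carrier (free_power N)" for x
    using that nN by (auto simp: free_power_def)
  have projm: "(x \<otimes>\<^bsub>free_power N\<^esub> y) n = x n \<otimes>\<^bsub>free_group_nat\<^esub> y n" for x y
    using nN by (simp add: free_power_def)
  have hom1: "psi G p s N (Suc n) \<in> hom (free_power N) G"
  proof (rule homI)
    fix x assume x: "x \<in> carrier (free_power N)"
    have "(psi G p s N n x, p (x n)) \<in> carrier (G \<times>\<times> G)"
      using IH(1) x proj[OF x] p by (simp add: hom_in_carrier)
    then show "psi G p s N (Suc n) x \<in> carrier G" using eq r(1) hom_carrier by fastforce
  next
    fix x y assume x: "x \<in> carrier (free_power N)" and y: "y \<in> carrier (free_power N)"
    have a: "(psi G p s N n x, p (x n)) \<in> carrier (G \<times>\<times> G)"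
      using IH(1) x proj[OF x] p by (simp add: hom_in_carrier)
    have b: "(psi G p s N n y, p (y n)) \<in> carrier (G \<times>\<times> G)"
      using IH(1) y proj[OF y] p by (simp add: hom_in_carrier)
    have "psi G p s N (Suc n) (x \<otimes>\<^bsub>free_power N\<^esub> y)
        = r ((psi G p s N n x, p (x n)) \<otimes>\<^bsub>G \<times>\<times> G\<^esub> (psi G p s N n y, p (y n)))"
      using hom_mult[OF IH(1) x y] hom_mult[OF p proj[OF x] proj[OF y]] eq projm by simp
    also have "\<dots> = psi G p s N (Suc n) x \<otimes>\<^bsub>G\<^esub> psi G p s N (Suc n) y"
      using hom_mult[OF r(1) a b] eq by simp
    finally show "psi G p s N (Suc n) (x \<otimes>\<^bsub>free_power N\<^esub> y) = psi G p s N (Suc n) x \<otimes>\<^bsub>G\<^esub> psi G p s N (Suc n) y" .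
  qed
  have r1: "r (\<one>\<^bsub>G\<^esub>, \<one>\<^bsub>G\<^esub>) = \<one>\<^bsub>G\<^esub>"
    using hom_one[OF r(1) GG G] by simp
  have pnil: "p [] = \<one>\<^bsub>G\<^esub>" using hom_nil[OF G p] .
  have incl_n: "incl N k s n = []" if "k \<noteq> n" for k
    using that nN by (simp add: incl_def free_group_nat_def)
  have part2: "\<forall>k<Suc n. psi G p s N (Suc n) (incl N k s) \<noteq> \<one>\<^bsub>G\<^esub>"
  proof (intro allI impI)
    fix k assume k: "k < Suc n"
    show "psi G p s N (Suc n) (incl N k s) \<noteq> \<one>\<^bsub>G\<^esub>"
    proof (cases "k < n")
      case True
      have "h k \<noteq> \<one>\<^bsub>G \<times>\<times> G\<^esub>" using IH(2) True by (simp add: h_def)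
      then have "r (h k) \<noteq> \<one>\<^bsub>G\<^esub>" using r(2) k by blast
      then show ?thesis using eq True incl_n[of k] pnil by (simp add: h_def)
    next
      case False
      then have kn: "k = n" using k by simp
      have z: "psi G p s N n (incl N n s) = \<one>\<^bsub>G\<^esub>"
      proof -
        have "\<forall>i<n. incl N n s i = []" using nN by (simp add: incl_def free_group_nat_def)
        then show ?thesis using IH(3) incl_carrier[OF s, of N n] by blast
      qed
      have "h n \<noteq> \<one>\<^bsub>G \<times>\<times> G\<^esub>" using ps by (simp add: h_def)
      then have "r (h n) \<noteq> \<one>\<^bsub>G\<^esub>" using r(2) by blast
      moreover have "incl N n s n = s" using nN by (simp add: incl_def)
      ultimately show ?thesis using eq kn z by (simp add: h_def)
    qed
  qed
  have part3: "\<forall>x\<in>carrier (free_power N). (\<forall>i<Suc n. x i = []) \<longrightarrow> psi G p s N (Suc n) x = \<one>\<^bsub>G\<^esub>"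
    using IH(3) eq r1 pnil by auto
  show ?case using hom1 part2 part3 by blast
qed

theorem theorem6p3:
  fixes G :: "('a, 'b) monoid_scheme" and S :: "word set"
  assumes "group G"
    and "discriminating G"
    and "weak_identities S G"
  shows "\<forall>s \<in> S. is_identity s G"
proof (intro ballI)
  fix s assume sS: "s \<in> S"
  show "is_identity s G" unfolding is_identity_def
  proof (rule ccontr)
    assume "\<not> (\<forall>\<pi>\<in>hom free_group_nat G. \<pi> s = \<one>\<^bsub>G\<^esub>)"
    then obtain p where p: "p \<in> hom free_group_nat G" and ps: "p s \<noteq> \<one>\<^bsub>G\<^esub>" by blast
    obtain N where N: "N \<ge> 1" and W: "\<forall>s :: nat \<Rightarrow> word. (\<forall>k<N. s k \<in> S) \<longrightarrow>
           (\<forall>\<rho> \<in> hom (free_power N) G. \<exists>k<N. \<rho> (incl N k (s k)) = \<one>\<^bsub>G\<^esub>)"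
      and Sc: "S \<subseteq> carrier free_group_nat"
      using assms(3) unfolding weak_identities_def by blast
    have sc: "s \<in> carrier free_group_nat" using Sc sS by blast
    note M = psi_main[OF assms(1) assms(2) p sc ps, of N N]
    then have "\<exists>k<N. psi G p s N N (incl N k s) = \<one>\<^bsub>G\<^esub>"
      using W[rule_format, of "\<lambda>_. s"] sS by auto
    then show False using M by auto
  qed
qed

end
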